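(* Let $a=a_1+a_2$ be a generalized core-EP decomposition of $a$ (i.e. $a_1^*a_2=a_2a_1=0$, $a_1$ is core invertible and $a_2\in\mathcal{A}^{qnil}$), and let $p=aa^{\mathrm{gcEP}}$. Then $a=\begin{pmatrix} t_1&t_2\\ 0&a_2\end{pmatrix}_p$, where $t_1\in (p\mathcal{A}p)^{-1}$, $a_2\in [(1-p)\mathcal{A}(1-p)]^{qnil}$. For any $b\in \mathcal{A}^{\mathrm{gcEP}}$, we have $a\leq^{\mathrm{gcEP}}b$ if and only if $b=\begin{pmatrix} t_1&t_2\\ 0&c\end{pmatrix}_p$, where $c\in (1-p)\mathcal{A}(1-p)$.
   Context: $\mathcal{A}$ is a complex Banach *-algebra with identity; $\mathcal{A}^{qnil}$ is the set of quasinilpotent elements. An element $a$ is core invertible if there is $x$ with $a=axa$, $x\mathcal{A}=a\mathcal{A}$, $\mathcal{A}x=\mathcal{A}a^*$. An element $a$ has a generalized core-EP inverse if there is $x$ with $x=ax^2$, $(ax)^*=ax$, $\lim_{n\to\infty}\|a^n-xa^{n+1}\|^{1/n}=0$; this $x$ is unique, denoted $a^{\mathrm{gcEP}}$, and $\mathcal{A}^{\mathrm{gcEP}}$ is the set of such $a$ ($a\in\mathcal{A}^{\mathrm{gcEP}}$ iff $a$ has a generalized core-EP decomposition). For $a,b\in\mathcal{A}^{\mathrm{gcEP}}$, the generalized core-EP order is $a\leq^{\mathrm{gcEP}}b$ iff $aa^{\mathrm{gcEP}}=ba^{\mathrm{gcEP}}$ and $a^{\mathrm{gcEP}}a=a^{\mathrm{gcEP}}b$.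 For a projection $p$, $x=\begin{pmatrix} pxp&px(1-p)\\ (1-p)xp&(1-p)x(1-p)\end{pmatrix}_p$. *)

theory Defs
  imports "HOL-Analysis.Analysis"
begin

class banach_star_algebra = real_normed_algebra_1 + banach +
  fixes scaleC :: "complex \<Rightarrow> 'a \<Rightarrow> 'a"
    and adj :: "'a \<Rightarrow> 'a"
  assumes scaleC_of_real: "scaleC (complex_of_real r) x = scaleR r x"
    and scaleC_add_right: "scaleC c (x + y) = scaleC c x + scaleC c y"
    and scaleC_add_left: "scaleC (c + d) x = scaleC c x + scaleC d x"
    and scaleC_scaleC: "scaleC c (scaleC d x) = scaleC (c * d) x"
    and scaleC_one: "scaleC 1 x = x"
    and scaleC_mult_left: "scaleC c (x * y) = scaleC c x * y"
    and scaleC_mult_right: "scaleC c (x * y) = x * scaleC c y"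
    and norm_scaleC: "norm (scaleC c x) = cmod c * norm x"
    and adj_adj: "adj (adj x) = x"
    and adj_add: "adj (x + y) = adj x + adj y"
    and adj_mult: "adj (x * y) = adj y * adj x"
    and adj_scaleC: "adj (scaleC c x) = scaleC (cnj c) (adj x)"

text \<open>Quasinilpotent elements (spectral radius formula: r(a) = 0).\<close>
definition qnil :: "'a::banach_star_algebra \<Rightarrow> bool" where
  "qnil a \<longleftrightarrow> (\<lambda>n. root n (norm (a ^ n))) \<longlonglongrightarrow> 0"

definition core_invertible :: "'a::banach_star_algebra \<Rightarrow> bool" where
  "core_invertible a \<longleftrightarrow> (\<exists>x. a = a * x * a \<and> range (\<lambda>y. x * y) = range (\<lambda>y. a * y)
      \<and> range (\<lambda>y. y * x) = range (\<lambda>y. y * adj a))"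

definition is_gcEP_inverse :: "'a::banach_star_algebra \<Rightarrow> 'a \<Rightarrow> bool" where
  "is_gcEP_inverse a x \<longleftrightarrow> x = a * x ^ 2 \<and> adj (a * x) = a * x
      \<and> (\<lambda>n. root n (norm (a ^ n - x * a ^ (n + 1)))) \<longlonglongrightarrow> 0"

definition has_gcEP :: "'a::banach_star_algebra \<Rightarrow> bool" where
  "has_gcEP a \<longleftrightarrow> (\<exists>x. is_gcEP_inverse a x)"

definition gcEP :: "'a::banach_star_algebra \<Rightarrow> 'a" where
  "gcEP a = (THE x. is_gcEP_inverse a x)"

definition gcEP_le :: "'a::banach_star_algebra \<Rightarrow> 'a \<Rightarrow> bool" where
  "gcEP_le a b \<longleftrightarrow> a * gcEP a = b * gcEP a \<and> gcEP a * a = gcEP a * b"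

definition gcEP_decomposition :: "'a::banach_star_algebra \<Rightarrow> 'a \<Rightarrow> 'a \<Rightarrow> bool" where
  "gcEP_decomposition a a1 a2 \<longleftrightarrow> a = a1 + a2 \<and> adj a1 * a2 = 0 \<and> a2 * a1 = 0
      \<and> core_invertible a1 \<and> qnil a2"

definition corner :: "'a::banach_star_algebra \<Rightarrow> 'a set" where
  "corner q = {q * x * q | x. True}"

definition corner_inv :: "'a::banach_star_algebra \<Rightarrow> 'a set" where
  "corner_inv q = {t \<in> corner q. \<exists>y \<in> corner q. t * y = q \<and> y * t = q}"

text \<open>Quasinilpotent elements of qAq (the norm of qAq is the restricted norm).\<close>
definition corner_qnil :: "'a::banach_star_algebra \<Rightarrow> 'a set" where
  "corner_qnil q = {t \<in> corner q. qnil t}"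

text \<open>x = (x11 x12; x21 x22)_p, matrix representation w.r.t. the projection p.\<close>
definition pmatrix :: "'a::banach_star_algebra \<Rightarrow> 'a \<Rightarrow> 'a \<Rightarrow> 'a \<Rightarrow> 'a \<Rightarrow> 'a \<Rightarrow> bool" where
  "pmatrix p x x11 x12 x21 x22 \<longleftrightarrow> p * x * p = x11 \<and> p * x * (1 - p) = x12
      \<and> (1 - p) * x * p = x21 \<and> (1 - p) * x * (1 - p) = x22"

end

theory Submission imports Defs begin
lemma root_small_zero:
  fixes c :: "'a::real_normed_vector"
  assumes lim: "(\<lambda>n. root n (r n)) \<longlonglongrightarrow> 0" and rnn: "\<And>n. 0 \<le> r n"
    and bnd: "\<And>n. norm c \<le> r n * B ^ (n+1)" and B: "0 \<le> B"
  shows "c = 0"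
proof -
  define e where "e = 1 / (2 * (B + 1))"
  have e: "0 < e" using B by (simp add: e_def)
  have eB: "e * B \<le> 1/2" using B by (simp add: e_def field_simps)
  have "eventually (\<lambda>n. root n (r n) < e) sequentially"
    using lim e by (simp add: order_tendstoD(2))
  then obtain N where N: "\<And>n. n \<ge> N \<Longrightarrow> root n (r n) < e"
    by (auto simp: eventually_sequentially)
  have le: "norm c \<le> B * (1/2) ^ n" if "n \<ge> Suc N" for n
  proof -
    have n0: "0 < n" using that by simp
    have "r n = root n (r n) ^ n" using real_root_pow_pos2[OF n0 rnn[of n]] by simp
    also have "\<dots> \<le> e ^ n"
      by (rule power_mono) (use N[of n] that real_root_ge_zero[OF rnn[of n]] in auto)
    finally have rn: "r n \<le> e ^ n" .
    have "norm c \<le> r n * B ^ (n+1)" by (rule bnd)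
    also have "\<dots> \<le> e ^ n * B ^ (n+1)"
      by (rule mult_right_mono[OF rn]) (use B in simp)
    also have "\<dots> = B * (e * B) ^ n" by (simp add: power_mult_distrib)
    also have "\<dots> \<le> B * (1/2) ^ n"
      by (rule mult_left_mono[OF power_mono]) (use e B eB in auto)
    finally show ?thesis .
  qed
  have "(\<lambda>n. B * (1/2::real) ^ n) \<longlonglongrightarrow> B * 0"
    by (intro tendsto_mult tendsto_const LIMSEQ_power_zero) auto
  hence "norm c \<le> B * 0"
    by (rule tendsto_le[OF sequentially_bot _ tendsto_const])
       (auto simp: eventually_sequentially intro!: exI[of _ "Suc N"] le)
  thus ?thesis by simp
qed

lemma pow_inv:
  fixes a x :: "'a::ring_1"
  assumes "x = a * x ^ 2"
  shows "a ^ n * x ^ (n+1) = x"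
proof (induction n)
  case 0 show ?case by simp
next
  case (Suc n)
  have x2: "x ^ (Suc n + 1) = x^2 * x^n" by (simp add: power_add[symmetric])
  have "a ^ Suc n * x ^ (Suc n + 1) = a ^ n * (a * x^2) * x ^ n"
    unfolding x2 power_Suc2[of a n] by (simp add: mult.assoc)
  also have "\<dots> = a ^ n * x ^ (n+1)" using assms by (simp add: mult.assoc power_commutes)
  finally show ?case using Suc by simp
qed


lemma adj_herm: "adj (x * adj x) = x * adj (x::'a::banach_star_algebra)"
  by (simp add: adj_mult adj_adj)

lemma adj_zero: "adj (0::'a::banach_star_algebra) = 0"
  by (metis add_cancel_right_right adj_add)

lemma core_props:
  fixes a1 :: "'a::banach_star_algebra"
  assumes "core_invertible a1"
  shows "\<exists>y. a1*y*a1 = a1 \<and> y*a1*y = y \<and> adj(a1*y) = a1*y \<and> a1*y*y = y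
     \<and> y*a1*a1 = a1 \<and> y = y * adj y * adj a1"
proof -
  obtain y where y1: "a1 = a1 * y * a1" and r1: "range (\<lambda>z. y * z) = range (\<lambda>z. a1 * z)"
    and r2: "range (\<lambda>z. z * y) = range (\<lambda>z. z * adj a1)"
    using assms unfolding core_invertible_def by blast
  have "y \<in> range (\<lambda>z. a1 * z)" using r1 by (metis mult_1_right rangeI)
  then obtain u where u: "y = a1 * u" by auto
  have "a1 \<in> range (\<lambda>z. y * z)" using r1 by (metis mult_1_right rangeI)
  then obtain v where v: "a1 = y * v" by auto
  have "y \<in> range (\<lambda>z. z * adj a1)" using r2 by (metis mult_1_left rangeI)
  then obtain w where w: "y = w * adj a1" by auto
  have e1: "adj a1 = adj a1 * adj y * adj a1"
    using arg_cong[OF y1, of adj] by (simp add: adj_mult mult.assoc)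
  have e2: "y = y * adj y * adj a1"
    by (metis e1 w mult.assoc)
  have e3: "a1 * y = (a1 * y) * adj (a1 * y)"
    by (metis e2 adj_mult mult.assoc)
  have h: "adj (a1 * y) = a1 * y" using e3 adj_herm by metis
  have e4: "a1 * y * y = y" by (metis u y1 mult.assoc)
  have e5: "adj a1 * (a1 * y) = adj a1"
    by (metis h adj_mult y1)
  have e6: "y * a1 * y = y" by (metis e5 w mult.assoc)
  have e7: "y * a1 * a1 = a1" by (metis e6 v mult.assoc)
  show ?thesis using y1 e6 h e4 e7 e2 by metis
qed


lemma a2_pow:
  fixes a a1 a2 :: "'a::ring_1"
  assumes "a = a1 + a2" "a2 * a1 = 0"
  shows "a2 * a ^ n = a2 ^ (n+1)"
proof (induction n)
  case 0 show ?case by simp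
next
  case (Suc n)
  have "a2 * a = a2 * a2" using assms by (simp add: algebra_simps)
  hence "a2 * a ^ Suc n = a2 * a2 * a ^ n" by (metis power_Suc mult.assoc)
  also have "\<dots> = a2 * a2 ^ (n+1)" using Suc by (simp add: mult.assoc)
  finally show ?case by simp
qed

lemma root_bound_lim:
  fixes u :: "'a::real_normed_algebra_1"
  assumes q: "(\<lambda>n. root n (norm (a2 ^ n))) \<longlonglongrightarrow> 0"
  shows "(\<lambda>n. root n (norm (u * a2 ^ n))) \<longlonglongrightarrow> 0"
proof (rule tendsto_sandwich[of "\<lambda>_. 0" _ _ "\<lambda>n. root n (norm u + 1) * root n (norm (a2 ^ n))"])
  show "\<forall>\<^sub>F n in sequentially. 0 \<le> root n (norm (u * a2 ^ n))"
    by (simp add: real_root_ge_zero)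
  show "\<forall>\<^sub>F n in sequentially. root n (norm (u * a2 ^ n)) \<le> root n (norm u + 1) * root n (norm (a2 ^ n))"
    unfolding eventually_sequentially
  proof (intro exI[of _ 1] allI impI)
    fix n :: nat assume n: "1 \<le> n"
    have "norm (u * a2 ^ n) \<le> (norm u + 1) * norm (a2 ^ n)"
      by (rule order_trans[OF norm_mult_ineq mult_right_mono]) auto
    hence "root n (norm (u * a2 ^ n)) \<le> root n ((norm u + 1) * norm (a2 ^ n))"
      using n by (intro real_root_le_mono) auto
    thus "root n (norm (u * a2 ^ n)) \<le> root n (norm u + 1) * root n (norm (a2 ^ n))"
      by (simp add: real_root_mult)
  qed
  show "(\<lambda>n. 0) \<longlonglongrightarrow> (0::real)" by simp
  have "(\<lambda>n. root n (norm u + 1) * root n (norm (a2 ^ n))) \<longlonglongrightarrow> 1 * 0"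
    by (intro tendsto_mult q LIMSEQ_root_const) (simp add: add_nonneg_pos)
  thus "(\<lambda>n. root n (norm u + 1) * root n (norm (a2 ^ n))) \<longlonglongrightarrow> 0" by simp
qed

lemma one_side:
  fixes a x y :: "'a::banach_star_algebra"
  assumes x: "x = a * x ^ 2" and y: "y = a * y ^ 2"
    and lim: "(\<lambda>n. root n (norm (a ^ n - x * a ^ (n + 1)))) \<longlonglongrightarrow> 0"
  shows "x * a * y = y"
proof -
  have "y - x * a * y = 0"
  proof (rule root_small_zero[OF lim])
    show "0 \<le> norm (a ^ n - x * a ^ (n + 1))" for n by simp
    show "0 \<le> norm y" by simp
    fix n
    have "y - x * a * y = a ^ n * y ^ (n+1) - x * a * (a ^ n * y ^ (n+1))"
      using pow_inv[OF y, of n] by simp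
    also have "\<dots> = (a ^ n - x * a ^ (n + 1)) * y ^ (n+1)"
      by (simp add: algebra_simps mult.assoc power_commutes)
    finally have "norm (y - x * a * y) = norm ((a ^ n - x * a ^ (n + 1)) * y ^ (n+1))" by simp
    also have "\<dots> \<le> norm (a ^ n - x * a ^ (n + 1)) * norm (y ^ (n+1))" by (rule norm_mult_ineq)
    also have "\<dots> \<le> norm (a ^ n - x * a ^ (n + 1)) * norm y ^ (n+1)"
      by (rule mult_left_mono[OF norm_power_ineq]) simp
    finally show "norm (y - x * a * y) \<le> norm (a ^ n - x * a ^ (n + 1)) * norm y ^ (n+1)" .
  qed
  thus ?thesis by simp
qed


theorem lemma4p2:
  fixes a a1 a2 p :: "'a::banach_star_algebra"
  assumes "gcEP_decomposition a a1 a2"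
    and "p = a * gcEP a"
  shows "\<exists>t1 t2. pmatrix p a t1 t2 0 a2 \<and> t1 \<in> corner_inv p \<and> a2 \<in> corner_qnil (1 - p)
    \<and> (\<forall>b::'a. has_gcEP b \<longrightarrow>
          (gcEP_le a b \<longleftrightarrow> (\<exists>c \<in> corner (1 - p). pmatrix p b t1 t2 0 c)))"
proof -
  have aeq: "a = a1 + a2" and h1: "adj a1 * a2 = 0" and h2: "a2 * a1 = 0"
    and ci: "core_invertible a1" and qa2: "qnil a2"
    using assms(1) unfolding gcEP_decomposition_def by auto
  obtain y where y1: "a1*y*a1 = a1" and y2: "y*a1*y = y" and y3: "adj(a1*y) = a1*y"
    and y4: "a1*y*y = y" and y5: "y*a1*a1 = a1" and y6: "y = y * adj y * adj a1"
    using core_props[OF ci] by blast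
  have ya2: "y * a2 = 0"
  proof -
    have "y * a2 = y * adj y * adj a1 * a2" using y6 by (rule arg_cong[where f="\<lambda>z. z * a2"])
    also have "\<dots> = y * adj y * (adj a1 * a2)" by (simp only: mult.assoc)
    finally show ?thesis using h1 by simp
  qed
  have a2y: "a2 * y = 0"
  proof -
    have "a2 * y = a2 * (a1 * y * y)" using y4 by simp
    also have "\<dots> = (a2 * a1) * y * y" by (simp only: mult.assoc)
    finally show ?thesis using h2 by simp
  qed
  have ay: "a * y = a1 * y" using aeq a2y by (simp add: algebra_simps)
  have ya: "y * a = y * a1" using aeq ya2 by (simp add: algebra_simps)
  have inv1: "y = a * y ^ 2" using ay y4 by (simp add: power2_eq_square mult.assoc[symmetric])
  have herm: "adj (a * y) = a * y" using ay y3 by simp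
  define u where "u = 1 - y * a1"
  have ua: "u * a = u * a2" using aeq y5 unfolding u_def by (simp add: algebra_simps mult.assoc)
  have diff: "a ^ n - y * a ^ (n + 1) = u * a2 ^ n" for n
  proof -
    have "y * a ^ (n + 1) = (y * a) * a ^ n" by (simp add: mult.assoc)
    also have "\<dots> = y * a1 * a ^ n" using ya by simp
    finally have "a ^ n - y * a ^ (n + 1) = a ^ n - y * a1 * a ^ n" by simp
    also have "\<dots> = u * a ^ n" unfolding u_def by (simp add: algebra_simps)
    finally have "a ^ n - y * a ^ (n + 1) = u * a ^ n" .
    also have "\<dots> = u * a2 ^ n"
    proof (cases n)
      case 0 then show ?thesis by simp
    next
      case (Suc m)
      have "u * a ^ n = u * a2 * a ^ m" using ua Suc by (simp add: mult.assoc[symmetric])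
      also have "\<dots> = u * a2 ^ n" using a2_pow[OF aeq h2, of m] Suc by (simp add: mult.assoc)
      finally show ?thesis .
    qed
    finally show ?thesis .
  qed
  have lim: "(\<lambda>n. root n (norm (a ^ n - y * a ^ (n + 1)))) \<longlonglongrightarrow> 0"
    unfolding diff using root_bound_lim qa2 unfolding qnil_def by blast
  have isy: "is_gcEP_inverse a y"
    unfolding is_gcEP_inverse_def using inv1 herm lim by blast
  have yay: "y * a * y = y" using ya y2 by simp
  have uniq: "x = y" if "is_gcEP_inverse a x" for x
  proof -
    have x1: "x = a * x^2" and x2: "adj (a * x) = a * x"
      and xl: "(\<lambda>n. root n (norm (a ^ n - x * a ^ (n + 1)))) \<longlonglongrightarrow> 0"
      using that unfolding is_gcEP_inverse_def by auto
    have xay: "x * a * y = y" by (rule one_side[OF x1 inv1 xl])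
    have yax: "y * a * x = x" by (rule one_side[OF inv1 x1 lim])
    have "a * y = (a * x) * (a * y)" using xay by (simp add: mult.assoc)
    hence "adj (a * y) = adj ((a * x) * (a * y))" by (rule arg_cong)
    also have "\<dots> = adj (a * y) * adj (a * x)" by (rule adj_mult)
    finally have "adj (a * y) = adj (a * y) * adj (a * x)" .
    hence "a * y = (a * y) * (a * x)" using herm x2 by simp
    also have "\<dots> = a * x" using yax by (simp add: mult.assoc)
    finally have "a * y = a * x" .
    hence "x = y * a * y" using yax by (simp add: mult.assoc)
    thus "x = y" using yay by simp
  qed
  have g: "gcEP a = y" unfolding gcEP_def using isy uniq by (rule the_equality)
  have pdef: "p = a1 * y" using assms(2) g ay by simp
  have pa1: "p * a1 = a1" using pdef y1 by simp
  have pa2: "p * a2 = 0" using pdef ya2 by (simp add: mult.assoc)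
  have a2p: "a2 * p = 0" using pdef h2 by (simp add: mult.assoc[symmetric])
  have ap: "a * p = a1 * p" using aeq a2p by (simp add: algebra_simps)
  have pa: "p * a = a1" using aeq pa1 pa2 by (simp add: algebra_simps)
  have py: "p * y = y" using pdef y4 by simp
  have yp: "y * p = y" using pdef y2 by (simp add: mult.assoc)
  have pp: "p * p = p"
  proof -
    have "p * p = (a1 * y * a1) * y" unfolding pdef by (simp only: mult.assoc)
    thus ?thesis using y1 pdef by simp
  qed
  have ypa1: "p = y * a1 * p"
  proof -
    have "y * a1 * p = (y * a1 * a1) * y" unfolding pdef by (simp only: mult.assoc)
    thus ?thesis using y5 pdef by simp
  qed
  define t1 where "t1 = p * a * p"
  define t2 where "t2 = p * a * (1 - p)"
  have pap: "p * (a * p) = a1 * p" using ap pa1 by (simp add: mult.assoc[symmetric])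
  have m21: "(1 - p) * a * p = 0"
    using ap pap by (simp add: algebra_simps)
  have m22: "(1 - p) * a * (1 - p) = a2"
    using aeq pa ap pap by (simp add: algebra_simps)
  have pm: "pmatrix p a t1 t2 0 a2"
    unfolding pmatrix_def t1_def t2_def using m21 m22 by simp
  have ycorner: "y \<in> corner p" unfolding corner_def
    using py yp by (metis (mono_tags, lifting) mem_Collect_eq)
  have t1y: "t1 * y = p" unfolding t1_def using yp pp py ay pdef by (simp add: mult.assoc)
  have yt1: "y * t1 = p"
  proof -
    have "y * t1 = (y * p) * a * p" unfolding t1_def by (simp only: mult.assoc)
    also have "\<dots> = y * (a * p)" using yp by (simp only: mult.assoc)
    also have "\<dots> = y * a1 * p" using ap by (simp only: mult.assoc)
    finally show ?thesis using ypa1 by (simp only:)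
  qed
  have t1c: "t1 \<in> corner_inv p"
    using ycorner t1y yt1 unfolding corner_inv_def t1_def by (auto simp: corner_def)
  have a2c: "a2 \<in> corner_qnil (1 - p)"
    unfolding corner_qnil_def corner_def using m22 qa2 by (metis (mono_tags, lifting) mem_Collect_eq)
  have eqv: "gcEP_le a b \<longleftrightarrow> (\<exists>c \<in> corner (1 - p). pmatrix p b t1 t2 0 c)" for b
  proof
    assume "gcEP_le a b"
    hence ab: "a * y = b * y" and ab2: "y * a = y * b" unfolding gcEP_le_def g by auto
    have pb: "p * b = p * a"
    proof -
      have "p * b = a1 * (y * b)" unfolding pdef by (simp only: mult.assoc)
      also have "\<dots> = a1 * (y * a)" using ab2 by simp
      finally show ?thesis unfolding pdef by (simp only: mult.assoc)
    qed
    have bp: "b * p = p * a1 * p"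
    proof -
      have "b * p = b * (y * a1 * p)" using ypa1 by simp
      also have "\<dots> = (b * y) * a1 * p" by (simp only: mult.assoc)
      also have "\<dots> = p * a1 * p" using ab ay pdef by simp
      finally show ?thesis .
    qed
    have "p * b * p = t1" unfolding t1_def using pb by simp
    moreover have "p * b * (1 - p) = t2" unfolding t2_def using pb by simp
    moreover have "(1 - p) * b * p = 0"
    proof -
      have q: "p * (p * (a1 * p)) = p * (a1 * p)" by (metis pp mult.assoc)
      show ?thesis using bp q by (simp add: algebra_simps)
    qed
    moreover have "(1 - p) * b * (1 - p) \<in> corner (1 - p)" unfolding corner_def by blast
    ultimately show "\<exists>c \<in> corner (1 - p). pmatrix p b t1 t2 0 c"
      unfolding pmatrix_def by blast
  next
    assume "\<exists>c \<in> corner (1 - p). pmatrix p b t1 t2 0 c"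
    then obtain c where "pmatrix p b t1 t2 0 c" by blast
    hence b11: "p * b * p = p * a * p" and b12: "p * b * (1 - p) = p * a * (1 - p)"
      and b21: "(1 - p) * b * p = 0"
      unfolding pmatrix_def t1_def t2_def by auto
    have pb: "p * b = p * a"
    proof -
      have "p * b = p * b * p + p * b * (1 - p)" by (simp add: algebra_simps)
      also have "\<dots> = p * a * p + p * a * (1 - p)" using b11 b12 by simp
      also have "\<dots> = p * a" by (simp add: algebra_simps)
      finally show ?thesis .
    qed
    have bp: "b * p = p * a * p"
    proof -
      have "b * p = p * b * p + (1 - p) * b * p" by (simp add: algebra_simps)
      thus ?thesis using b11 b21 by simp
    qed
    have "b * y = a * y"
    proof -
      have "b * y = b * p * y" using py by (simp add: mult.assoc)
      also have "\<dots> = p * a * p * y" using bp by simp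
      also have "\<dots> = p * (a * y)" using py by (simp add: mult.assoc)
      also have "\<dots> = a * y" using pp ay pdef by simp
      finally show ?thesis .
    qed
    moreover have "y * b = y * a"
    proof -
      have "y * b = y * (p * b)" using yp by (metis mult.assoc)
      also have "\<dots> = y * (p * a)" using pb by simp
      also have "\<dots> = y * a" using yp by (metis mult.assoc)
      finally show ?thesis .
    qed
    ultimately show "gcEP_le a b" unfolding gcEP_le_def g by simp
  qed
  show ?thesis using pm t1c a2c eqv by blast
qed

end
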